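(* Let $L=\{\ell_1,\dots,\ell_n\}$, $R=\{r_1,\dots,r_d\}$ and let $T_1,T_2$ be two compatible spanning trees of the complete bipartite graph on $L\sqcup R$ with right degree vectors $v$ and $v+e_p-e_q$ respectively. If $(\ell_s,r_p)$ is an edge of $T_1$, then it is also an edge of $T_2$. Furthermore, the degree of $\ell_s$ in $T_1$ is greater than or equal to its degree in $T_2$.
   Context: Graphs are identified with edge sets; right degree vector $=(\deg r_1,\dots,\deg r_d)$; $e_p$ is a standard unit vector. Two graphs are compatible if for all $J\subseteq L$, $I\subseteq R$ such that both contain a perfect matching between $J$ and $I$ (as subgraphs), these perfect matchings are equal. *)

theory Defs
  imports Main
begin

text \<open>Left vertices are l_0..l_(n-1), right vertices r_0..r_(d-1) (0-based).
  A graph on L + R (subgraph of the complete bipartite graph) is its edge set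
  T :: (nat \<times> nat) set, where (i,j) stands for the edge {l_i, r_j}.\<close>

definition bip_vertices :: "nat \<Rightarrow> nat \<Rightarrow> (nat + nat) set" where
  "bip_vertices n d = Inl ` {..<n} \<union> Inr ` {..<d}"

definition bip_adj :: "(nat \<times> nat) set \<Rightarrow> ((nat + nat) \<times> (nat + nat)) set" where
  "bip_adj T = {(Inl i, Inr j) | i j. (i, j) \<in> T} \<union> {(Inr j, Inl i) | i j. (i, j) \<in> T}"

definition bip_connected :: "nat \<Rightarrow> nat \<Rightarrow> (nat \<times> nat) set \<Rightarrow> bool" where
  "bip_connected n d T \<longleftrightarrow>
     (\<forall>u \<in> bip_vertices n d. \<forall>v \<in> bip_vertices n d. (u, v) \<in> (bip_adj T)\<^sup>*)"

definition bip_acyclic :: "(nat \<times> nat) set \<Rightarrow> bool" where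
  "bip_acyclic T \<longleftrightarrow>
     (\<forall>i j. (i, j) \<in> T \<longrightarrow> (Inl i, Inr j) \<notin> (bip_adj (T - {(i, j)}))\<^sup>*)"

definition spanning_tree :: "nat \<Rightarrow> nat \<Rightarrow> (nat \<times> nat) set \<Rightarrow> bool" where
  "spanning_tree n d T \<longleftrightarrow>
     T \<subseteq> {..<n} \<times> {..<d} \<and> bip_connected n d T \<and> bip_acyclic T"

definition perfect_matching_between ::
    "(nat \<times> nat) set \<Rightarrow> nat set \<Rightarrow> nat set \<Rightarrow> bool" where
  "perfect_matching_between M J I \<longleftrightarrow>
     M \<subseteq> J \<times> I \<and>
     (\<forall>i \<in> J. \<exists>!j. (i, j) \<in> M) \<and>
     (\<forall>j \<in> I. \<exists>!i. (i, j) \<in> M)"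

definition compatible :: "nat \<Rightarrow> nat \<Rightarrow> (nat \<times> nat) set \<Rightarrow> (nat \<times> nat) set \<Rightarrow> bool" where
  "compatible n d T1 T2 \<longleftrightarrow>
     (\<forall>J I M1 M2. J \<subseteq> {..<n} \<longrightarrow> I \<subseteq> {..<d} \<longrightarrow>
        M1 \<subseteq> T1 \<longrightarrow> perfect_matching_between M1 J I \<longrightarrow>
        M2 \<subseteq> T2 \<longrightarrow> perfect_matching_between M2 J I \<longrightarrow> M1 = M2)"

definition right_deg :: "(nat \<times> nat) set \<Rightarrow> nat \<Rightarrow> nat" where
  "right_deg T j = card {i. (i, j) \<in> T}"

definition left_deg :: "(nat \<times> nat) set \<Rightarrow> nat \<Rightarrow> nat" where
  "left_deg T i = card {j. (i, j) \<in> T}"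

end

theory Submission
  imports Defs
begin

definition uedge :: "(nat \<times> nat) set \<Rightarrow> (nat \<times> nat) set \<Rightarrow> ((nat + nat) \<times> (nat + nat)) set" where
  "uedge T1 T2 = {(Inl i, Inr j) | i j. (i, j) \<in> T1} \<union> {(Inr j, Inl i) | i j. (i, j) \<in> T2}"

lemma uedge_simps[simp]:
  "(Inl i, Inr j) \<in> uedge T1 T2 \<longleftrightarrow> (i,j) \<in> T1"
  "(Inr j, Inl i) \<in> uedge T1 T2 \<longleftrightarrow> (i,j) \<in> T2"
  "(Inl i, Inl i') \<notin> uedge T1 T2"
  "(Inr j, Inr j') \<notin> uedge T1 T2"
  by (auto simp: uedge_def)

lemma uedge_cases:
  assumes "(x,y) \<in> uedge T1 T2"
  obtains (L) i j where "x = Inl i" "y = Inr j" "(i,j) \<in> T1"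
        | (R) i j where "x = Inr j" "y = Inl i" "(i,j) \<in> T2"
  using assms by (auto simp: uedge_def)

lemma uedge_swap: "uedge T2 T1 = (uedge T1 T2)\<inverse>"
  by (auto simp: uedge_def)

lemma closed_walk_bad:
  assumes T1: "T1 \<subseteq> {..<n} \<times> {..<d}" and T2: "T2 \<subseteq> {..<n} \<times> {..<d}"
    and comp: "compatible n d T1 T2"
    and e1: "(l, r) \<in> T1" and e2: "(l, r) \<notin> T2"
    and path: "(Inr r, Inl l) \<in> (uedge T1 T2)\<^sup>*"
  shows False
proof -
  let ?A = "uedge T1 T2"
  define P where "P m \<longleftrightarrow> (\<exists>u. 0 < m \<and> u 0 = Inl l \<and> u (Suc 0) = Inr r \<and> u m = u 0 \<and> (\<forall>i<m. (u i, u (Suc i)) \<in> ?A))" for m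
  obtain N where "(Inr r, Inl l) \<in> ?A ^^ N" using path rtrancl_power by blast
  then obtain f where f: "f 0 = Inr r" "f N = Inl l" "\<forall>i<N. (f i, f (Suc i)) \<in> ?A"
    by (auto simp: relpow_fun_conv)
  define u0 where "u0 k = (if k = 0 then Inl l else f (k - 1))" for k
  have "P (Suc N)"
    unfolding P_def
  proof (intro exI[of _ u0] conjI allI impI)
    fix i assume "i < Suc N"
    then show "(u0 i, u0 (Suc i)) \<in> ?A"
      using f e1 by (cases i) (auto simp: u0_def)
  qed (use f in \<open>auto simp: u0_def\<close>)
  then obtain m where Pm: "P m" and minm: "\<And>k. k < m \<Longrightarrow> \<not> P k"
    by (metis exists_least_iff)
  then obtain u where m0: "0 < m" and u0: "u 0 = Inl l" and u1: "u (Suc 0) = Inr r"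
    and um: "u m = u 0" and ue: "\<And>i. i < m \<Longrightarrow> (u i, u (Suc i)) \<in> ?A"
    unfolding P_def by blast
  have inj: "u i \<noteq> u j" if ij: "i < j" "j < m" for i j
  proof
    assume eq: "u i = u j"
    show False
    proof (cases "i = 0")
      case True
      have "P j" unfolding P_def
        using ij eq True u0 u1 ue by (intro exI[of _ u]) auto
      then show False using minm ij by blast
    next
      case False
      define u' where "u' k = (if k \<le> i then u k else u (k + (j - i)))" for k
      have "P (m - (j - i))" unfolding P_def
      proof (intro exI[of _ u'] conjI allI impI)
        show "0 < m - (j - i)" using ij by simp
        show "u' 0 = Inl l" using u0 by (simp add: u'_def)
        show "u' (Suc 0) = Inr r" using u1 False by (simp add: u'_def)
        show "u' (m - (j - i)) = u' 0" using ij um by (simp add: u'_def)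
        fix k assume k: "k < m - (j - i)"
        show "(u' k, u' (Suc k)) \<in> ?A"
        proof (cases "k < i")
          case True then show ?thesis using ue[of k] ij by (simp add: u'_def)
        next
          case F2: False
          show ?thesis
          proof (cases "k = i")
            case True
            then show ?thesis using ue[of j] ij eq by (simp add: u'_def)
          next
            case False
            then have "k > i" using F2 by simp
            then show ?thesis using ue[of "k + (j - i)"] ij k
              by (simp add: u'_def)
          qed
        qed
      qed
      moreover have "m - (j - i) < m" using ij by simp
      ultimately show False using minm by blast
    qed
  qed
  have inj': "i = j" if "i < m" "j < m" "u i = u j" for i j
    using inj that by (metis linorder_neqE_nat)
  define JJ where "JJ = {a. \<exists>i<m. u i = Inl a}"
  define II where "II = {b. \<exists>i<m. u i = Inr b}"
  define M1 where "M1 = {(a,b). \<exists>i<m. u i = Inl a \<and> u (Suc i) = Inr b}"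
  define M2 where "M2 = {(a,b). \<exists>i<m. u i = Inr b \<and> u (Suc i) = Inl a}"
  have M1T: "M1 \<subseteq> T1"
  proof
    fix e assume "e \<in> M1"
    then obtain a b i where "e = (a,b)" "i < m" "u i = Inl a" "u (Suc i) = Inr b"
      unfolding M1_def by blast
    then show "e \<in> T1" using ue[of i] by auto
  qed
  have M2T: "M2 \<subseteq> T2"
  proof
    fix e assume "e \<in> M2"
    then obtain a b i where "e = (a,b)" "i < m" "u i = Inr b" "u (Suc i) = Inl a"
      unfolding M2_def by blast
    then show "e \<in> T2" using ue[of i] by auto
  qed
  have JJn: "JJ \<subseteq> {..<n}"
  proof
    fix a assume "a \<in> JJ"
    then obtain i where i: "i < m" "u i = Inl a" unfolding JJ_def by blast
    from ue[OF i(1)] show "a \<in> {..<n}"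
      by (cases rule: uedge_cases) (use i T1 in auto)
  qed
  have IId: "II \<subseteq> {..<d}"
  proof
    fix b assume "b \<in> II"
    then obtain i where i: "i < m" "u i = Inr b" unfolding II_def by blast
    from ue[OF i(1)] show "b \<in> {..<d}"
      by (cases rule: uedge_cases) (use i T2 in auto)
  qed
  have sucm: "Suc i < m" if "i < m" "u (Suc i) = Inr b" for i b
  proof -
    have "Suc i \<noteq> m" using that um u0 by auto
    then show ?thesis using that by simp
  qed
  have pm1: "perfect_matching_between M1 JJ II"
    unfolding perfect_matching_between_def
  proof (intro conjI ballI)
    show "M1 \<subseteq> JJ \<times> II"
      unfolding M1_def JJ_def II_def using sucm by blast
  next
    fix a assume "a \<in> JJ"
    then obtain i where i: "i < m" "u i = Inl a" unfolding JJ_def by blast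
    from ue[OF i(1)] obtain b where b: "u (Suc i) = Inr b"
      by (cases rule: uedge_cases) (use i in auto)
    show "\<exists>!b. (a, b) \<in> M1"
    proof (rule ex1I[of _ b])
      show "(a,b) \<in> M1" unfolding M1_def using i b by blast
      fix b' assume "(a,b') \<in> M1"
      then obtain i' where "i' < m" "u i' = Inl a" "u (Suc i') = Inr b'" unfolding M1_def by blast
      then show "b' = b" using inj'[of i' i] i b by auto
    qed
  next
    fix b assume "b \<in> II"
    then obtain i where i: "i < m" "u i = Inr b" unfolding II_def by blast
    then obtain k where k: "i = Suc k" using u0 by (cases i) auto
    from ue[of k] k i obtain a where a: "u k = Inl a"
      by (cases rule: uedge_cases) auto
    show "\<exists>!a. (a, b) \<in> M1"
    proof (rule ex1I[of _ a])
      show "(a,b) \<in> M1" unfolding M1_def using i k a by (auto intro!: exI[of _ k])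
      fix a' assume "(a',b) \<in> M1"
      then obtain i' where i': "i' < m" "u i' = Inl a'" "u (Suc i') = Inr b" unfolding M1_def by blast
      with sucm have "Suc i' < m" by blast
      then have "Suc i' = i" using inj'[of "Suc i'" i] i i' by auto
      then show "a' = a" using k a i' by auto
    qed
  qed
  have pm2: "perfect_matching_between M2 JJ II"
    unfolding perfect_matching_between_def
  proof (intro conjI ballI)
    show "M2 \<subseteq> JJ \<times> II"
    proof
      fix e assume "e \<in> M2"
      then obtain a b i where e: "e = (a,b)" "i < m" "u i = Inr b" "u (Suc i) = Inl a"
        unfolding M2_def by blast
      have "a \<in> JJ"
      proof (cases "Suc i < m")
        case True then show ?thesis using e unfolding JJ_def by blast
      next
        case False
        then have "Suc i = m" using e by simp
        then have "u 0 = Inl a" using e um by simp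
        then show ?thesis using m0 unfolding JJ_def by blast
      qed
      then show "e \<in> JJ \<times> II" using e unfolding II_def by blast
    qed
  next
    fix a assume "a \<in> JJ"
    then obtain i where i: "i < m" "u i = Inl a" unfolding JJ_def by blast
    define k where "k = (if i = 0 then m - 1 else i - 1)"
    have k: "k < m" "u (Suc k) = Inl a"
      using i m0 um u0 by (auto simp: k_def)
    from ue[OF k(1)] k obtain b where b: "u k = Inr b"
      by (cases rule: uedge_cases) auto
    show "\<exists>!b. (a, b) \<in> M2"
    proof (rule ex1I[of _ b])
      show "(a,b) \<in> M2" unfolding M2_def using k b by blast
      fix b' assume "(a,b') \<in> M2"
      then obtain k' where k': "k' < m" "u k' = Inr b'" "u (Suc k') = Inl a" unfolding M2_def by blast
      have "k' = k"
      proof (cases "Suc k' < m")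
        case True
        then have "Suc k' = i" using inj'[of "Suc k'" i] i k' by auto
        then show ?thesis by (auto simp: k_def)
      next
        case False
        then have "Suc k' = m" using k' by simp
        then have "u 0 = u i" using k' um i by simp
        then have "i = 0" using inj'[of 0 i] i m0 by auto
        then show ?thesis using \<open>Suc k' = m\<close> by (auto simp: k_def)
      qed
      then show "b' = b" using k' b by simp
    qed
  next
    fix b assume "b \<in> II"
    then obtain i where i: "i < m" "u i = Inr b" unfolding II_def by blast
    from ue[OF i(1)] i obtain a where a: "u (Suc i) = Inl a"
      by (cases rule: uedge_cases) auto
    show "\<exists>!a. (a, b) \<in> M2"
    proof (rule ex1I[of _ a])
      show "(a,b) \<in> M2" unfolding M2_def using i a by blast
      fix a' assume "(a',b) \<in> M2"
      then obtain i' where "i' < m" "u i' = Inr b" "u (Suc i') = Inl a'" unfolding M2_def by blast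
      then show "a' = a" using inj'[of i' i] i a by auto
    qed
  qed
  have "M1 = M2"
    using comp JJn IId M1T M2T pm1 pm2 unfolding compatible_def by blast
  moreover have "(l, r) \<in> M1" unfolding M1_def using m0 u0 u1 by blast
  moreover have "(l, r) \<notin> M2"
  proof
    assume "(l, r) \<in> M2"
    then obtain i where i: "i < m" "u i = Inr r" "u (Suc i) = Inl l" unfolding M2_def by blast
    have m1: "Suc 0 < m"
    proof (rule ccontr)
      assume "\<not> Suc 0 < m" then have "m = Suc 0" using m0 by simp
      then show False using um u0 u1 by simp
    qed
    have "i = Suc 0" using inj'[of i "Suc 0"] i m1 u1 by auto
    show False
    proof (cases "Suc (Suc 0) < m")
      case True
      then show False using inj'[of "Suc (Suc 0)" 0] i \<open>i = Suc 0\<close> u0 by auto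
    next
      case False
      then have "m = Suc (Suc 0)" using i \<open>i = Suc 0\<close> by simp
      then have "(Inr r, Inl l) \<in> ?A" using ue[of "Suc 0"] u1 um u0 by simp
      then show False using e2 by simp
    qed
  qed
  ultimately show False by simp
qed

lemma compatible_sym: "compatible n d T1 T2 \<Longrightarrow> compatible n d T2 T1"
  unfolding compatible_def
proof (intro allI impI)
  fix J I M1 M2
  assume c: "\<forall>J I M1 M2. J \<subseteq> {..<n} \<longrightarrow> I \<subseteq> {..<d} \<longrightarrow> M1 \<subseteq> T1 \<longrightarrow> perfect_matching_between M1 J I \<longrightarrow> M2 \<subseteq> T2 \<longrightarrow> perfect_matching_between M2 J I \<longrightarrow> M1 = M2"
    and h: "J \<subseteq> {..<n}" "I \<subseteq> {..<d}" "M1 \<subseteq> T2" "perfect_matching_between M1 J I" "M2 \<subseteq> T1" "perfect_matching_between M2 J I"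
  show "M1 = M2" using c[rule_format, OF h(1,2,5,6,3,4)] by simp
qed

lemma closed_walk_bad2:
  assumes T1: "T1 \<subseteq> {..<n} \<times> {..<d}" and T2: "T2 \<subseteq> {..<n} \<times> {..<d}"
    and comp: "compatible n d T1 T2"
    and e1: "(l, r) \<in> T2" and e2: "(l, r) \<notin> T1"
    and path: "(Inl l, Inr r) \<in> (uedge T1 T2)\<^sup>*"
  shows False
proof -
  have "(Inr r, Inl l) \<in> (uedge T2 T1)\<^sup>*"
    unfolding uedge_swap[of T2 T1] by (rule rtrancl_converseI[OF path])
  then show False using closed_walk_bad[OF T2 T1 compatible_sym[OF comp] e1 e2] by blast
qed

lemma card_snd_sum:
  assumes "finite T" "finite B"
  shows "card {e \<in> T. snd e \<in> B} = (\<Sum>j\<in>B. right_deg T j)"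
  using assms(2)
proof (induction B rule: finite_induct)
  case empty then show ?case by simp
next
  case (insert j B)
  have eq: "{e \<in> T. snd e \<in> insert j B} = {e \<in> T. snd e = j} \<union> {e \<in> T. snd e \<in> B}" by auto
  have "{e \<in> T. snd e = j} = (\<lambda>i. (i,j)) ` {i. (i,j) \<in> T}" by auto
  then have c: "card {e \<in> T. snd e = j} = right_deg T j"
    unfolding right_deg_def by (simp add: card_image inj_on_def)
  have "card {e \<in> T. snd e \<in> insert j B} = card {e \<in> T. snd e = j} + card {e \<in> T. snd e \<in> B}"
    unfolding eq using assms(1) insert by (intro card_Un_disjoint) auto
  then show ?case using insert c by simp
qed

theorem lemma2p11:
  fixes n d p q s :: nat and T1 T2 :: "(nat \<times> nat) set"
  assumes "spanning_tree n d T1" and "spanning_tree n d T2"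
    and "compatible n d T1 T2"
    and "p < d" and "q < d" and "p \<noteq> q"
    and "\<forall>j < d. int (right_deg T2 j) =
            int (right_deg T1 j) + (if j = p then 1 else 0) - (if j = q then 1 else 0)"
    and "s < n" and "(s, p) \<in> T1"
  shows "(s, p) \<in> T2 \<and> left_deg T1 s \<ge> left_deg T2 s"
proof -
  note st = assms(1,2)[unfolded spanning_tree_def]
  have T1: "T1 \<subseteq> {..<n} \<times> {..<d}" and T2: "T2 \<subseteq> {..<n} \<times> {..<d}"
    and conn2: "bip_connected n d T2" using st by auto
  note comp = assms(3)
  define A where "A = uedge T1 T2"
  define V where "V = bip_vertices n d"
  have finV: "finite V" unfolding V_def bip_vertices_def by simp
  have pV: "Inr p \<in> V" using assms(4) unfolding V_def bip_vertices_def by simp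
  have AV: "x \<in> V \<and> y \<in> V" if "(x,y) \<in> A" for x y
    using that unfolding A_def
    by (cases rule: uedge_cases) (use T1 T2 in \<open>auto simp: V_def bip_vertices_def\<close>)
  define anc where "anc x = {y \<in> V. (y, x) \<in> A\<^sup>*}" for x
  have financ: "finite (anc x)" for x unfolding anc_def using finV by simp
  obtain w where wV: "w \<in> V" and wmin: "\<And>y. y \<in> V \<Longrightarrow> card (anc w) \<le> card (anc y)"
    using ex_has_least_nat[of "\<lambda>x. x \<in> V" "Inr p" "\<lambda>x. card (anc x)"] pV by blast
  define Y where "Y = anc w"
  have mutual: "(w, y) \<in> A\<^sup>*" if "y \<in> Y" for y
  proof -
    have yV: "y \<in> V" and yw: "(y, w) \<in> A\<^sup>*" using that unfolding Y_def anc_def by auto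
    have sub: "anc y \<subseteq> anc w" unfolding anc_def using yw by auto
    have "card (anc w) \<le> card (anc y)" using wmin yV by blast
    then have "anc y = anc w" using sub financ by (meson card_seteq)
    moreover have "w \<in> anc w" unfolding anc_def using wV by simp
    ultimately show ?thesis unfolding anc_def by auto
  qed
  have bkw: "x \<in> Y" if "(x,y) \<in> A" "y \<in> Y" for x y
    using that AV[OF that(1)] unfolding Y_def anc_def
    by (auto intro: converse_rtrancl_into_rtrancl)
  have internal: "(i,j) \<in> T2 \<and> Inl i \<in> Y" if ij: "(i,j) \<in> T1" "Inr j \<in> Y" for i j
  proof
    have iY: "Inl i \<in> Y" using bkw[of "Inl i" "Inr j"] ij unfolding A_def by simp
    then show "Inl i \<in> Y" .
    show "(i,j) \<in> T2"
    proof (rule ccontr)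
      assume nT2: "(i,j) \<notin> T2"
      have "(Inr j, w) \<in> A\<^sup>*" using ij(2) unfolding Y_def anc_def by simp
      also have "(w, Inl i) \<in> A\<^sup>*" using mutual[OF iY] .
      finally show False using closed_walk_bad[OF T1 T2 comp ij(1) nT2] unfolding A_def by blast
    qed
  qed
  define YR where "YR = {j. Inr j \<in> Y}"
  have YRd: "YR \<subseteq> {..<d}" unfolding YR_def Y_def anc_def V_def bip_vertices_def by auto
  have finYR: "finite YR" using YRd finite_subset by blast
  have finT1: "finite T1" and finT2: "finite T2"
    using T1 T2 finite_subset by (blast intro: finite_cartesian_product)+
  define A1 where "A1 = {e \<in> T1. snd e \<in> YR}"
  define A2 where "A2 = {e \<in> T2. snd e \<in> YR}"
  have A12: "A1 \<subseteq> A2" unfolding A1_def A2_def YR_def using internal by auto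
  have finA2: "finite A2" unfolding A2_def using finT2 by simp
  have cnt: "int (card A2) = int (card A1) + (if p \<in> YR then 1 else 0) - (if q \<in> YR then 1 else 0)"
  proof -
    have "int (card A2) = (\<Sum>j\<in>YR. int (right_deg T2 j))"
      unfolding A2_def card_snd_sum[OF finT2 finYR] by simp
    also have "\<dots> = (\<Sum>j\<in>YR. int (right_deg T1 j) + (if j = p then 1 else 0) - (if j = q then 1 else 0))"
      using assms(7) YRd by (intro sum.cong) auto
    also have "\<dots> = (\<Sum>j\<in>YR. int (right_deg T1 j)) + (\<Sum>j\<in>YR. (if j = p then 1 else 0)) - (\<Sum>j\<in>YR. (if j = q then 1 else 0))"
      by (simp add: sum.distrib sum_subtractf)
    also have "\<dots> = int (card A1) + (if p \<in> YR then 1 else 0) - (if q \<in> YR then 1 else 0)"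
      unfolding A1_def card_snd_sum[OF finT1 finYR] using finYR by (simp add: sum.delta)
    finally show ?thesis .
  qed
  have pY: "p \<in> YR"
  proof (rule ccontr)
    assume np: "p \<notin> YR"
    then have "card A2 \<le> card A1" using cnt by (simp split: if_splits)
    then have A21: "A2 = A1" using A12 finA2 using card_seteq[OF finA2 A12] by simp
    have closed: "z' \<in> Y" if "(z, z') \<in> bip_adj T2" "z \<in> Y" for z z'
      using that(1) unfolding bip_adj_def
    proof (elim UnE CollectE exE conjE)
      fix i j assume e: "(z, z') = (Inl i, Inr j)" "(i,j) \<in> T2"
      have "(Inr j, Inl i) \<in> A" unfolding A_def using e(2) by simp
      moreover have "Inl i \<in> Y" using e(1) that(2) by simp
      ultimately have "Inr j \<in> Y" by (rule bkw)
      then show "z' \<in> Y" using e(1) by simp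
    next
      fix i j assume e: "(z, z') = (Inr j, Inl i)" "(i,j) \<in> T2"
      have "Inr j \<in> Y" using e(1) that(2) by simp
      then have "(i,j) \<in> A2" unfolding A2_def YR_def using e(2) by simp
      then have "(i,j) \<in> T1" "j \<in> YR" using A21 unfolding A1_def by auto
      then have "Inr j \<in> Y" unfolding YR_def by simp
      then have "Inl i \<in> Y" using internal[OF \<open>(i,j) \<in> T1\<close>] by blast
      then show "z' \<in> Y" using e(1) by simp
    qed
    have "(w, Inr p) \<in> (bip_adj T2)\<^sup>*" using conn2 wV pV unfolding bip_connected_def V_def by blast
    then have "Inr p \<in> Y"
    proof (induction rule: rtrancl_induct)
      case base then show ?case unfolding Y_def anc_def using wV by simp
    next
      case (step y z) then show ?case using closed by blast
    qed
    then show False using np unfolding YR_def by simp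
  qed
  have "Inr p \<in> Y" using pY unfolding YR_def by simp
  from internal[OF assms(9) this] have sY: "Inl s \<in> Y" and spT2: "(s,p) \<in> T2" by simp_all
  have "{j. (s,j) \<in> T2} \<subseteq> {j. (s,j) \<in> T1}"
  proof
    fix j assume "j \<in> {j. (s,j) \<in> T2}"
    then have sj: "(s,j) \<in> T2" by simp
    have jY: "Inr j \<in> Y" using bkw[of "Inr j" "Inl s"] sj sY unfolding A_def by simp
    show "j \<in> {j. (s,j) \<in> T1}"
    proof (rule ccontr)
      assume "j \<notin> {j. (s,j) \<in> T1}"
      then have nT1: "(s,j) \<notin> T1" by simp
      have "(Inl s, w) \<in> A\<^sup>*" using sY unfolding Y_def anc_def by simp
      also have "(w, Inr j) \<in> A\<^sup>*" using mutual[OF jY] .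
      finally have "(Inl s, Inr j) \<in> (uedge T1 T2)\<^sup>*" unfolding A_def .
      then show False by (rule closed_walk_bad2[OF T1 T2 comp sj nT1])
    qed
  qed
  moreover have "{j. (s,j) \<in> T1} \<subseteq> {..<d}" using T1 by blast
  then have "finite {j. (s,j) \<in> T1}" using finite_subset by blast
  ultimately have "left_deg T2 s \<le> left_deg T1 s"
    unfolding left_deg_def by (rule card_mono[rotated])
  then show ?thesis using spT2 by simp
qed

end
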